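(* Let $d,k$ be integers with $2\leq d\leq\frac{k+1}{2}$, $\Sigma_k=\{\sigma_1,\ldots,\sigma_k\}$, $\Sigma_d=\{\sigma_1,\ldots,\sigma_d\}$. Consider $r\geq2$ users over $\Sigma_k$, where user 1 has confusion graph $G_1=(\Sigma_k,\{ab\mid a\in\Sigma_k,\ b\in\Sigma_k\setminus\Sigma_d,\ a\neq b\})$ and users $2,\ldots,r$ have confusion graphs $G_2,\ldots,G_r$ each containing (as edge sets) the complement $\overline{G_1}=(\Sigma_k,\{ab\mid a,b\in\Sigma_d,\ a\neq b\})$. If $(\alpha\log_2 d,R_2,\ldots,R_r)$ with $\alpha\in[0,1]$ is a feasible rate vector, then $\sum_{i=2}^r R_i\leq(1-\alpha)\log_2(k-d+1)$.
   Context: Setting: a sender broadcasts a word of length $n$ over a finite alphabet $\Sigma$ to $r$ users; user $i$ has a confusion graph $G_i$ on vertex set $\Sigma$, where $ab$ is an edge iff user $i$ cannot distinguish letters $a$ and $b$. Two words $x,y\in\Sigma^n$ are distinguishable by user $i$ if there is a coordinate $t$ with $x_t\neq y_t$ and $x_ty_t$ not an edge of $G_i$. A vector $(m_1,\ldots,m_r)$ of positive integers is feasible for length $n$ if there is a map $E:[m_1]\times\cdots\times[m_r]\to\Sigma^n$ such that for every $i$ and all tuples $a,a'$ with $a_i\neq a'_i$, $E(a)$ and $E(a')$ are distinguishable by user $i$. A rate vector $(R_1,\ldots,R_r)$ is feasible if there is a sequence of feasible vectors for lengths $n\to\infty$ with $R_i=\lim_{n\to\infty}\frac{\log_2 m_i^{(n)}}{n}$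 for all $i$. *)

theory Defs
  imports "HOL-Analysis.Analysis"
begin

text \<open>Alphabet letters are natural numbers; a confusion graph is a binary relation
  on letters (edge relation). Words of length n are functions nat \<Rightarrow> nat, only the
  coordinates t < n matter.\<close>

definition distinguishable :: "(nat \<Rightarrow> nat \<Rightarrow> bool) \<Rightarrow> nat \<Rightarrow> (nat \<Rightarrow> nat) \<Rightarrow> (nat \<Rightarrow> nat) \<Rightarrow> bool" where
  "distinguishable G n x y \<longleftrightarrow> (\<exists>t<n. x t \<noteq> y t \<and> \<not> G (x t) (y t))"

definition feasible_vector ::
  "nat set \<Rightarrow> (nat \<Rightarrow> nat \<Rightarrow> nat \<Rightarrow> bool) \<Rightarrow> nat \<Rightarrow> nat \<Rightarrow> (nat \<Rightarrow> nat) \<Rightarrow> bool" where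
  "feasible_vector \<Sigma> G r n m \<longleftrightarrow>
     (\<forall>i\<in>{1..r}. m i \<ge> 1) \<and>
     (\<exists>E :: (nat \<Rightarrow> nat) \<Rightarrow> (nat \<Rightarrow> nat).
        (\<forall>a \<in> Pi\<^sub>E {1..r} (\<lambda>i. {..<m i}). \<forall>t<n. E a t \<in> \<Sigma>) \<and>
        (\<forall>i\<in>{1..r}. \<forall>a \<in> Pi\<^sub>E {1..r} (\<lambda>i. {..<m i}). \<forall>a' \<in> Pi\<^sub>E {1..r} (\<lambda>i. {..<m i}).
            a i \<noteq> a' i \<longrightarrow> distinguishable (G i) n (E a) (E a')))"

definition feasible_rate ::
  "nat set \<Rightarrow> (nat \<Rightarrow> nat \<Rightarrow> nat \<Rightarrow> bool) \<Rightarrow> nat \<Rightarrow> (nat \<Rightarrow> real) \<Rightarrow> bool" where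
  "feasible_rate \<Sigma> G r R \<longleftrightarrow>
     (\<exists>(N :: nat \<Rightarrow> nat) (M :: nat \<Rightarrow> nat \<Rightarrow> nat).
        filterlim N at_top sequentially \<and>
        (\<forall>j. feasible_vector \<Sigma> G r (N j) (M j)) \<and>
        (\<forall>i\<in>{1..r}. (\<lambda>j. log 2 (real (M j i)) / real (N j)) \<longlonglongrightarrow> R i))"

end

theory Submission
  imports Defs
begin

lemma powr_convex0:
  assumes "s \<ge> 1" shows "convex_on {0..} (\<lambda>x::real. x powr s)"
proof (rule convex_onI)
  fix t x y :: real assume t: "0 < t" "t < 1" and x: "x \<in> {0..}" and y: "y \<in> {0..}"
  have tp: "\<And>t::real. 0 \<le> t \<Longrightarrow> t \<le> 1 \<Longrightarrow> t powr s \<le> t"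
    using assms by (metis powr_mono' powr_one_gt_zero_iff powr_one powr_zero_eq_one
        less_eq_real_def zero_le_one powr_0 le_less)
  show "((1 - t) *\<^sub>R x + t *\<^sub>R y) powr s \<le> (1 - t) * x powr s + t * y powr s"
  proof (cases "x = 0 \<or> y = 0")
    case True
    then show ?thesis
    proof
      assume "x = 0"
      then have "((1 - t) *\<^sub>R x + t *\<^sub>R y) powr s = t powr s * y powr s"
        using y t by (simp add: powr_mult)
      also have "\<dots> \<le> t * y powr s" using tp[of t] t by (intro mult_right_mono) auto
      finally show ?thesis using \<open>x = 0\<close> by simp
    next
      assume "y = 0"
      then have "((1 - t) *\<^sub>R x + t *\<^sub>R y) powr s = (1-t) powr s * x powr s"
        using x t by (simp add: powr_mult)
      also have "\<dots> \<le> (1-t) * x powr s" using tp[of "1-t"] t by (intro mult_right_mono) auto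
      finally show ?thesis using \<open>y = 0\<close> by simp
    qed
  next
    case False
    then have "x \<in> {0<..}" "y \<in> {0<..}" using x y by auto
    then show ?thesis using convex_onD[OF powr_convex[OF assms], of t x y] t by simp
  qed
qed (simp add: convex_real_interval)

lemma powr_inc:
  fixes a b e s :: real
  assumes "s \<ge> 1" "0 \<le> a" "a \<le> b" "0 \<le> e"
  shows "(a+e) powr s - a powr s \<le> (b+e) powr s - b powr s"
proof (cases "e = 0")
  case True then show ?thesis by simp
next
  case False
  let ?g = "\<lambda>x::real. x powr s"
  define L where "L = b + e - a"
  have L: "L > 0" using False assms unfolding L_def by auto
  define t where "t = e / L"
  have t: "0 \<le> t" "t \<le> 1" using L assms unfolding t_def L_def by (auto simp: field_simps)
  have cv: "convex_on {0..} ?g" by (rule powr_convex0[OF assms(1)])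
  have tL: "t * L = e" using L by (simp add: t_def)
  have 1: "a + e = (1 - t) *\<^sub>R a + t *\<^sub>R (b+e)"
    using tL unfolding L_def by (simp add: algebra_simps)
  have 2: "b = (1 - (1-t)) *\<^sub>R a + (1-t) *\<^sub>R (b+e)"
    using tL unfolding L_def by (simp add: algebra_simps)
  have a0: "a \<in> {0..}" and c0: "b + e \<in> {0..}" using assms by auto
  have "?g ((1 - t) *\<^sub>R a + t *\<^sub>R (b+e)) \<le> (1 - t) * ?g a + t * ?g (b+e)"
    by (rule convex_onD[OF cv t a0 c0])
  then have A: "?g (a+e) \<le> (1 - t) * ?g a + t * ?g (b+e)" by (simp only: 1[symmetric])
  have t': "0 \<le> 1 - t" "1 - t \<le> 1" using t by auto
  have "?g ((1 - (1-t)) *\<^sub>R a + (1-t) *\<^sub>R (b+e)) \<le> (1 - (1-t)) * ?g a + (1-t) * ?g (b+e)"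
    by (rule convex_onD[OF cv t' a0 c0])
  then have B: "?g b \<le> (1 - (1-t)) * ?g a + (1-t) * ?g (b+e)" by (simp only: 2[symmetric])
  from A B have "?g (a+e) + ?g b \<le> ?g a + ?g (b+e)" by (simp add: algebra_simps)
  then show ?thesis by simp
qed

lemma powr_inc_sum:
  fixes e :: "nat \<Rightarrow> real"
  assumes "finite V" "s \<ge> 1" "0 \<le> i" "i \<le> a" "\<And>v. v \<in> V \<Longrightarrow> 0 \<le> e v"
  shows "(\<Sum>v\<in>V. (i + e v) powr s - i powr s) \<le> (a + (\<Sum>v\<in>V. e v)) powr s - a powr s"
  using assms(1,5) assms(4)
proof (induction V arbitrary: a rule: finite_induct)
  case empty then show ?case by simp
next
  case (insert w V)
  have S: "0 \<le> (\<Sum>v\<in>V. e v)" using insert by (intro sum_nonneg) auto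
  have "(\<Sum>v\<in>insert w V. (i + e v) powr s - i powr s)
      = ((i + e w) powr s - i powr s) + (\<Sum>v\<in>V. (i + e v) powr s - i powr s)"
    using insert by simp
  also have "\<dots> \<le> ((a + (\<Sum>v\<in>V. e v) + e w) powr s - (a + (\<Sum>v\<in>V. e v)) powr s)
       + ((a + (\<Sum>v\<in>V. e v)) powr s - a powr s)"
    using powr_inc[OF assms(2) assms(3), of "a + (\<Sum>v\<in>V. e v)" "e w"] insert S
    by (intro add_mono) auto
  also have "\<dots> = (a + (\<Sum>v\<in>insert w V. e v)) powr s - a powr s"
    using insert by (simp add: algebra_simps)
  finally show ?case .
qed

lemma num_key:
  fixes u :: "nat \<Rightarrow> real"
  assumes "d \<ge> 1" "s \<ge> 1" "0 \<le> i" "\<And>v. v < d \<Longrightarrow> i \<le> u v" "real d powr s = q"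
  shows "(q - d) * i powr s + (\<Sum>v<d. u v powr s) \<le> (\<Sum>v<d. u v) powr s"
proof -
  have di: "i \<le> real d * i" using assms by (simp add: mult_le_cancel_right1)
  have "(\<Sum>v<d. (i + (u v - i)) powr s - i powr s) \<le> (real d * i + (\<Sum>v<d. u v - i)) powr s - (real d * i) powr s"
    using powr_inc_sum[of "{..<d}" s i "real d * i" "\<lambda>v. u v - i"] assms di by auto
  moreover have "(real d * i) powr s = q * i powr s"
    using assms by (simp add: powr_mult)
  moreover have "real d * i + (\<Sum>v<d. u v - i) = (\<Sum>v<d. u v)"
    by (simp add: sum_subtractf)
  moreover have "(\<Sum>v<d. (i + (u v - i)) powr s - i powr s) = (\<Sum>v<d. u v powr s) - d * i powr s"
    by (simp add: sum_subtractf)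
  ultimately show ?thesis by (simp add: algebra_simps)
qed


definition cube :: "nat \<Rightarrow> nat \<Rightarrow> (nat\<Rightarrow>nat) \<Rightarrow> (nat\<Rightarrow>nat) set" where
  "cube d n x = {y \<in> PiE {..<n} (\<lambda>_. {..<d}). \<forall>t<n. x t < d \<longrightarrow> y t = x t}"
definition cls :: "nat \<Rightarrow> nat \<Rightarrow> nat \<Rightarrow> (nat\<Rightarrow>nat) \<Rightarrow> (nat\<Rightarrow>nat)" where
  "cls d k n x = restrict (\<lambda>t. if x t < d then k else x t) {..<n}"
definition Fs :: "nat \<Rightarrow> nat \<Rightarrow> nat \<Rightarrow> (nat\<Rightarrow>nat) set \<Rightarrow> (nat\<Rightarrow>nat) set" where
  "Fs d k n U = cls d k n ` {x. (\<forall>t<n. x t < k) \<and> cube d n x \<subseteq> U}"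

lemma Fs_sub: "Fs d k n U \<subseteq> PiE {..<n} (\<lambda>_. {..k})"
  by (auto simp: Fs_def cls_def PiE_iff split: if_splits)

lemma finite_Fs: "finite (Fs d k n U)"
  by (rule finite_subset[OF Fs_sub]) (simp add: finite_PiE)

lemma Fs_mono: "U \<subseteq> V \<Longrightarrow> Fs d k n U \<subseteq> Fs d k n V"
  by (auto simp: Fs_def)

lemma cls_Suc: "cls d k (Suc n) x = (cls d k n x)(n := (if x n < d then k else x n))"
  by (auto simp: cls_def fun_eq_iff)

lemma ext_cube: "y' \<in> cube d n x \<Longrightarrow> v < d \<Longrightarrow> (x n < d \<Longrightarrow> v = x n) \<Longrightarrow> y'(n:=v) \<in> cube d (Suc n) x"
  by (auto simp: cube_def PiE_iff less_Suc_eq extensional_def)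

lemma restrict_upd: "y' \<in> PiE {..<n::nat} S \<Longrightarrow> restrict (y'(n:=v)) {..<n} = y'"
  proof (rule ext)
  fix t assume y': "y' \<in> PiE {..<n} S"
  show "restrict (y'(n:=v)) {..<n} t = y' t"
    proof (cases "t < n")
    case True then have "t \<noteq> n" by simp
    with True show ?thesis by simp
  next
    case False then show ?thesis using y' by (simp add: PiE_def extensional_def)
  qed
qed

lemma cube_sub: "cube d n x \<subseteq> PiE {..<n} (\<lambda>_. {..<d})"
  by (auto simp: cube_def)

lemma fbound:
  assumes "U \<subseteq> PiE {..<n} (\<lambda>_. {..<d})" "d \<ge> 1" "s \<ge> 1"
    "real d powr s = real (k+1-d)" "d \<le> k+1-d"
  shows "real (card (Fs d k n U)) \<le> real (card U) powr s"
  using assms(1)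
proof (induction n arbitrary: U)
  case 0
  show ?case
  proof (cases "U = {}")
    case True
    have "Fs d k 0 U = {}" using True by (auto simp: Fs_def cube_def)
    then show ?thesis by simp
  next
    case False
    have U: "U = {\<lambda>_. undefined}" using 0 False by auto
    have "Fs d k 0 U \<subseteq> {\<lambda>_. undefined}" by (auto simp: Fs_def cls_def)
    then have "card (Fs d k 0 U) \<le> card {\<lambda>_::nat. undefined::nat}" by (intro card_mono) auto
    then show ?thesis using U by simp
  qed
next
  case (Suc n)
  let ?P = "PiE {..<n} (\<lambda>_. {..<d})"
  define Uv where "Uv v = (\<lambda>y. restrict y {..<n}) ` {y\<in>U. y n = v}" for v
  define I where "I = {y \<in> ?P. \<forall>v<d. y \<in> Uv v}"
  have finU: "finite U" using Suc.prems by (rule finite_subset) (simp add: finite_PiE)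
  have Uv_sub: "Uv v \<subseteq> ?P" for v
    using Suc.prems by (auto simp: Uv_def PiE_iff split: if_splits)
  have I_sub: "I \<subseteq> Uv v" if "v < d" for v using that by (auto simp: I_def)
  have I_P: "I \<subseteq> ?P" by (auto simp: I_def)
  have finUv: "finite (Uv v)" for v using finU by (simp add: Uv_def)
  define A where "A = (\<lambda>(c,l). c(n:=l)) ` (Fs d k n I \<times> {d..<k})"
  define B where "B = (\<lambda>c. c(n:=k)) ` (\<Union>v<d. Fs d k n (Uv v))"
  have sub: "Fs d k (Suc n) U \<subseteq> A \<union> B"
  proof
    fix c assume "c \<in> Fs d k (Suc n) U"
    then obtain x where c: "c = cls d k (Suc n) x" and xk: "\<forall>t<Suc n. x t < k"
      and xc: "cube d (Suc n) x \<subseteq> U" by (auto simp: Fs_def)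
    have xk': "\<forall>t<n. x t < k" using xk by auto
    show "c \<in> A \<union> B"
    proof (cases "x n < d")
      case True
      have "cube d n x \<subseteq> Uv (x n)"
      proof
        fix y' assume y': "y' \<in> cube d n x"
        have "y'(n := x n) \<in> U" using ext_cube[OF y' True] xc by auto
        moreover have "restrict (y'(n := x n)) {..<n} = y'"
          using y' cube_sub[of d n x] by (intro restrict_upd[of _ n "\<lambda>_. {..<d}"]) blast
        ultimately show "y' \<in> Uv (x n)" unfolding Uv_def
          by (intro image_eqI[where x="y'(n := x n)"]) auto
      qed
      then have "cls d k n x \<in> Fs d k n (Uv (x n))" using xk' by (auto simp: Fs_def)
      then have "c \<in> B" unfolding B_def using True c cls_Suc[of d k n x] by auto
      then show ?thesis by simp
    next
      case False
      have "cube d n x \<subseteq> I"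
      proof
        fix y' assume y': "y' \<in> cube d n x"
        have "y' \<in> Uv v" if v: "v < d" for v
        proof -
          have "y'(n := v) \<in> U" using ext_cube[OF y' v] False xc by auto
          moreover have "restrict (y'(n := v)) {..<n} = y'"
            using y' cube_sub[of d n x] by (intro restrict_upd[of _ n "\<lambda>_. {..<d}"]) blast
          ultimately show "y' \<in> Uv v" unfolding Uv_def
            by (intro image_eqI[where x="y'(n := v)"]) auto
        qed
        then show "y' \<in> I" using y' cube_sub[of d n x] unfolding I_def by blast
      qed
      then have "cls d k n x \<in> Fs d k n I" using xk' by (auto simp: Fs_def)
      moreover have "x n \<in> {d..<k}" using False xk by auto
      ultimately have "c \<in> A" unfolding A_def using False c cls_Suc[of d k n x]
        by (auto intro!: image_eqI[where x="(cls d k n x, x n)"])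
      then show ?thesis by simp
    qed
  qed
  define fI where "fI = card (Fs d k n I)"
  define f where "f v = card (Fs d k n (Uv v))" for v
  have fIf: "fI \<le> f v" if "v < d" for v
    unfolding fI_def f_def using Fs_mono[OF I_sub[OF that]] finite_Fs by (rule card_mono[rotated])
  have cA: "card A \<le> fI * (k - d)"
    unfolding A_def fI_def by (rule order_trans[OF card_image_le]) (auto simp: finite_Fs)
  have "(\<Union>v<d. Fs d k n (Uv v)) \<subseteq> Fs d k n I \<union> (\<Union>v<d. Fs d k n (Uv v) - Fs d k n I)" by blast
  then have "card (\<Union>v<d. Fs d k n (Uv v)) \<le> card (Fs d k n I \<union> (\<Union>v<d. Fs d k n (Uv v) - Fs d k n I))"
    by (intro card_mono) (auto simp: finite_Fs)
  also have "\<dots> \<le> fI + card (\<Union>v<d. Fs d k n (Uv v) - Fs d k n I)"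
    unfolding fI_def by (rule card_Un_le)
  also have "card (\<Union>v<d. Fs d k n (Uv v) - Fs d k n I) \<le> (\<Sum>v<d. card (Fs d k n (Uv v) - Fs d k n I))"
    by (rule card_UN_le) simp
  also have "(\<Sum>v<d. card (Fs d k n (Uv v) - Fs d k n I)) = (\<Sum>v<d. f v - fI)"
    using Fs_mono[OF I_sub] by (intro sum.cong refl) (simp add: card_Diff_subset finite_Fs f_def fI_def)
  finally have cB0: "card (\<Union>v<d. Fs d k n (Uv v)) \<le> fI + (\<Sum>v<d. f v - fI)" by simp
  have cB: "card B \<le> fI + (\<Sum>v<d. f v - fI)"
    unfolding B_def by (rule order_trans[OF card_image_le cB0]) (auto simp: finite_Fs)
  have "card (Fs d k (Suc n) U) \<le> card (A \<union> B)"
    by (rule card_mono[OF _ sub]) (auto simp: A_def B_def finite_Fs)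
  also have "\<dots> \<le> card A + card B" by (rule card_Un_le)
  finally have c1: "card (Fs d k (Suc n) U) \<le> fI * (k - d) + (fI + (\<Sum>v<d. f v - fI))"
    using cA cB by linarith
  have sreal: "real (\<Sum>v<d. f v - fI) = (\<Sum>v<d. real (f v)) - real d * fI"
    using fIf by (simp add: of_nat_diff sum_subtractf)
  have kd: "real (k - d) = real (k+1-d) - 1" using assms(5) by auto
  have c2: "real (card (Fs d k (Suc n) U)) \<le> (real (k+1-d) - real d) * fI + (\<Sum>v<d. real (f v))"
  proof -
    have "real (card (Fs d k (Suc n) U)) \<le> real (fI * (k - d) + (fI + (\<Sum>v<d. f v - fI)))"
      using c1 by linarith
    also have "\<dots> = real fI * real (k - d) + real fI + real (\<Sum>v<d. f v - fI)"
      by simp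
    also have "\<dots> = (real (k+1-d) - real d) * fI + (\<Sum>v<d. real (f v))"
      unfolding sreal kd by (simp add: algebra_simps)
    finally show ?thesis .
  qed
  have qd: "0 \<le> real (k+1-d) - real d" using assms(5) by simp
  have IH1: "real fI \<le> real (card I) powr s" unfolding fI_def by (rule Suc.IH[OF I_P])
  have IH2: "real (f v) \<le> real (card (Uv v)) powr s" for v unfolding f_def by (rule Suc.IH[OF Uv_sub])
  have "real (card (Fs d k (Suc n) U)) \<le> (real (k+1-d) - real d) * real (card I) powr s
          + (\<Sum>v<d. real (card (Uv v)) powr s)"
    using c2 mult_left_mono[OF IH1 qd] sum_mono[of "{..<d}" "\<lambda>v. real (f v)" "\<lambda>v. real (card (Uv v)) powr s", OF IH2] by linarith
  also have "\<dots> \<le> (\<Sum>v<d. real (card (Uv v))) powr s"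
    using assms(2,3,4) by (intro num_key) (auto intro: card_mono[OF finUv I_sub])
  also have "(\<Sum>v<d. real (card (Uv v))) \<le> real (card U)"
  proof -
    have "(\<Sum>v<d. card (Uv v)) \<le> (\<Sum>v<d. card {y\<in>U. y n = v})"
      unfolding Uv_def by (intro sum_mono card_image_le) (simp add: finU)
    also have "\<dots> = card (\<Union>v<d. {y\<in>U. y n = v})"
      by (rule card_UN_disjoint[symmetric]) (auto simp: finU)
    also have "(\<Union>v<d. {y\<in>U. y n = v}) = U" using Suc.prems by (auto simp: PiE_iff)
    finally show ?thesis unfolding of_nat_sum[symmetric] of_nat_le_iff .
  qed
  then have "(\<Sum>v<d. real (card (Uv v))) powr s \<le> real (card U) powr s"
    using assms(3) by (intro powr_mono2) (auto intro: sum_nonneg)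
  finally show ?case .
qed


lemma finite_bound:
  fixes d k r n :: nat and G :: "nat \<Rightarrow> nat \<Rightarrow> nat \<Rightarrow> bool" and m :: "nat \<Rightarrow> nat" and s :: real
  assumes d: "2 \<le> d" "2*d \<le> k+1" and r: "2 \<le> r"
    and G1: "\<And>a b. G 1 a b \<longleftrightarrow>
               a \<in> {..<k} \<and> b \<in> {..<k} \<and> a \<noteq> b \<and> (a \<notin> {..<d} \<or> b \<notin> {..<d})"
    and Gcomp: "\<And>i a b. i \<in> {2..r} \<Longrightarrow> a \<in> {..<d} \<Longrightarrow> b \<in> {..<d} \<Longrightarrow> a \<noteq> b \<Longrightarrow> G i a b"
    and s: "s \<ge> 1" "real d powr s = real (k+1-d)"
    and fv: "feasible_vector {..<k} G r n m"
  shows "real (m 1) * (\<Prod>i\<in>{2..r}. real (m i)) powr (1/s) \<le> real d ^ n"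
proof -
  let ?Pi = "PiE {1..r} (\<lambda>i. {..<m i})"
  let ?Q = "PiE {..<n} (\<lambda>_. {..<d})"
  obtain E where Ek: "\<forall>a\<in>?Pi. \<forall>t<n. E a t \<in> {..<k}"
    and Ed: "\<forall>i\<in>{1..r}. \<forall>a\<in>?Pi. \<forall>a'\<in>?Pi. a i \<noteq> a' i \<longrightarrow> distinguishable (G i) n (E a) (E a')"
    and m1: "\<forall>i\<in>{1..r}. m i \<ge> 1"
    using fv unfolding feasible_vector_def by (elim conjE exE) (rule that, assumption+)
  define U where "U a1 = (\<Union>a\<in>{a\<in>?Pi. a 1 = a1}. cube d n (E a))" for a1
  have U_Q: "U a1 \<subseteq> ?Q" for a1 unfolding U_def using cube_sub by blast
  have finQ: "finite ?Q" by (simp add: finite_PiE)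
  have disj: "U a1 \<inter> U a2 = {}" if "a1 \<noteq> a2" for a1 a2
  proof (rule ccontr)
    assume "U a1 \<inter> U a2 \<noteq> {}"
    then obtain y a a' where a: "a \<in> ?Pi" "a 1 = a1" and a': "a' \<in> ?Pi" "a' 1 = a2"
      and y: "y \<in> cube d n (E a)" "y \<in> cube d n (E a')" unfolding U_def by blast
    have "1 \<in> {1..r}" using r by auto
    then have "distinguishable (G 1) n (E a) (E a')" using Ed a a' that by auto
    then obtain t where t: "t < n" "E a t \<noteq> E a' t" "\<not> G 1 (E a t) (E a' t)"
      unfolding distinguishable_def by blast
    have "E a t < d" "E a' t < d" using t G1 Ek a a' by auto
    then show False using y t by (auto simp: cube_def)
  qed
  have lower: "(\<Prod>i\<in>{2..r}. real (m i)) powr (1/s) \<le> real (card (U a1))" if a1: "a1 < m 1" for a1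
  proof -
    let ?B = "PiE {2..r} (\<lambda>i. {..<m i})"
    define h where "h b = cls d k n (E (b(1:=a1)))" for b
    have inPi: "b(1:=a1) \<in> ?Pi" if "b \<in> ?B" for b
      using that a1 r by (auto simp: PiE_iff extensional_def)
    have "h ` ?B \<subseteq> Fs d k n (U a1)"
    proof
      fix c assume "c \<in> h ` ?B"
      then obtain b where b: "b \<in> ?B" "c = h b" by blast
      have "cube d n (E (b(1:=a1))) \<subseteq> U a1" unfolding U_def using inPi[OF b(1)] by auto
      moreover have "\<forall>t<n. E (b(1:=a1)) t < k" using Ek inPi[OF b(1)] by auto
      ultimately show "c \<in> Fs d k n (U a1)" unfolding Fs_def h_def b(2) by blast
    qed
    moreover have "inj_on h ?B"
    proof
      fix b b' assume b: "b \<in> ?B" and b': "b' \<in> ?B" and hb: "h b = h b'"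
      show "b = b'"
      proof (rule ccontr)
        assume "b \<noteq> b'"
        then obtain i where i: "i \<in> {2..r}" "b i \<noteq> b' i"
          using b b' by (metis PiE_ext)
        have i1: "i \<in> {1..r}" "i \<noteq> 1" using i by auto
        have "(b(1:=a1)) i \<noteq> (b'(1:=a1)) i" using i i1 by auto
        then have "distinguishable (G i) n (E (b(1:=a1))) (E (b'(1:=a1)))"
          using Ed i1 inPi[OF b] inPi[OF b'] by blast
        then obtain t where t: "t < n" "E (b(1:=a1)) t \<noteq> E (b'(1:=a1)) t"
           "\<not> G i (E (b(1:=a1)) t) (E (b'(1:=a1)) t)"
          unfolding distinguishable_def by blast
        have k1: "E (b(1:=a1)) t < k" "E (b'(1:=a1)) t < k" using Ek inPi[OF b] inPi[OF b'] t by auto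
        have "\<not> (E (b(1:=a1)) t < d \<and> E (b'(1:=a1)) t < d)" using Gcomp[OF i(1)] t by auto
        then have "h b t \<noteq> h b' t" using t k1 by (auto simp: h_def cls_def)
        then show False using hb by simp
      qed
    qed
    ultimately have "card ?B \<le> card (Fs d k n (U a1))"
      using finite_Fs by (intro card_inj_on_le) auto
    moreover have "card ?B = (\<Prod>i\<in>{2..r}. m i)" by (simp add: card_PiE)
    ultimately have "(\<Prod>i\<in>{2..r}. m i) \<le> card (Fs d k n (U a1))" by simp
    then have "(\<Prod>i\<in>{2..r}. real (m i)) \<le> real (card (Fs d k n (U a1)))" by (metis of_nat_prod of_nat_mono)
    also have "\<dots> \<le> real (card (U a1)) powr s"
      using d s by (intro fbound[OF U_Q]) auto
    finally have P: "(\<Prod>i\<in>{2..r}. real (m i)) \<le> real (card (U a1)) powr s" by simp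
    have "(\<Prod>i\<in>{2..r}. real (m i)) powr (1/s) \<le> (real (card (U a1)) powr s) powr (1/s)"
      using P s by (intro powr_mono2) (auto intro: prod_nonneg)
    also have "\<dots> = real (card (U a1))" using s by (simp add: powr_powr)
    finally show ?thesis .
  qed
  have "real (m 1) * (\<Prod>i\<in>{2..r}. real (m i)) powr (1/s) = (\<Sum>a1<m 1. (\<Prod>i\<in>{2..r}. real (m i)) powr (1/s))"
    by simp
  also have "\<dots> \<le> (\<Sum>a1<m 1. real (card (U a1)))" by (intro sum_mono lower) auto
  also have "\<dots> = real (card (\<Union>a1<m 1. U a1))"
    using disj finQ U_Q by (subst card_UN_disjoint) (auto intro: finite_subset[OF U_Q finQ])
  also have "\<dots> \<le> real (card ?Q)"
    using U_Q finQ by (intro of_nat_mono card_mono) auto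
  also have "\<dots> = real d ^ n" by (simp add: card_PiE)
  finally show ?thesis .
qed


theorem corollary14:
  fixes d k r :: nat and G :: "nat \<Rightarrow> nat \<Rightarrow> nat \<Rightarrow> bool"
    and R :: "nat \<Rightarrow> real" and \<alpha> :: real
  assumes "2 \<le> d" and "2 * d \<le> k + 1" and "2 \<le> r"
    and G1: "\<And>a b. G 1 a b \<longleftrightarrow>
               a \<in> {..<k} \<and> b \<in> {..<k} \<and> a \<noteq> b \<and> (a \<notin> {..<d} \<or> b \<notin> {..<d})"
    and Gsym: "\<And>i a b. i \<in> {2..r} \<Longrightarrow> G i a b \<Longrightarrow> G i b a"
    and Gon: "\<And>i a b. i \<in> {2..r} \<Longrightarrow> G i a b \<Longrightarrow> a \<in> {..<k} \<and> b \<in> {..<k} \<and> a \<noteq> b"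
    and Gcomp: "\<And>i a b. i \<in> {2..r} \<Longrightarrow> a \<in> {..<d} \<Longrightarrow> b \<in> {..<d} \<Longrightarrow> a \<noteq> b \<Longrightarrow> G i a b"
    and "0 \<le> \<alpha>" and "\<alpha> \<le> 1"
    and "R 1 = \<alpha> * log 2 (real d)"
    and "feasible_rate {..<k} G r R"
  shows "(\<Sum>i=2..r. R i) \<le> (1 - \<alpha>) * log 2 (real k - real d + 1)"
proof -
  define q where "q = real (k+1-d)"
  have q: "q = real k - real d + 1" using assms(1,2) by (simp add: q_def)
  have d1: "real d > 1" using assms(1) by simp
  have qd: "real d \<le> q" using assms(1,2) by (simp add: q_def)
  define s where "s = log (real d) q"
  have spow: "real d powr s = real (k+1-d)"
    unfolding s_def q_def[symmetric] using d1 qd by (simp add: powr_log_cancel)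
  have s1: "s \<ge> 1"
  proof -
    have "log (real d) (real d) \<le> log (real d) q" using d1 qd by (subst log_le_cancel_iff) auto
    then show ?thesis using d1 by (simp add: s_def)
  qed
  have lnd: "ln (real d) > 0" using d1 by simp
  have sln: "s * ln (real d) = ln q" unfolding s_def log_def using lnd by simp
  obtain N M where N: "filterlim N at_top sequentially"
    and fvA: "\<forall>j. feasible_vector {..<k} G r (N j) (M j)"
    and limA: "\<forall>i\<in>{1..r}. (\<lambda>j. log 2 (real (M j i)) / real (N j)) \<longlonglongrightarrow> R i"
    using assms(11) unfolding feasible_rate_def by (elim exE conjE) (rule that, assumption+)
  have fv: "\<And>j. feasible_vector {..<k} G r (N j) (M j)" using fvA by blast
  have lim: "\<And>i. i \<in> {1..r} \<Longrightarrow> (\<lambda>j. log 2 (real (M j i)) / real (N j)) \<longlonglongrightarrow> R i"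
    using limA by blast
  have Mpos: "M j i \<ge> 1" if "i \<in> {1..r}" for i j using fv[of j] that unfolding feasible_vector_def by (elim conjE) (rule bspec)
  define L where "L j = log 2 (real (M j 1)) / real (N j) + (1/s) * (\<Sum>i=2..r. log 2 (real (M j i)) / real (N j))" for j
  have Lle: "L j \<le> log 2 (real d)" if Nj: "N j > 0" for j
  proof -
    have fb: "real (M j 1) * (\<Prod>i\<in>{2..r}. real (M j i)) powr (1/s) \<le> real d ^ N j"
      using finite_bound[OF assms(1,2,3) G1 Gcomp s1 spow fv[of j]] by blast
    have m1: "real (M j 1) > 0" using Mpos[of 1 j] assms(3) by auto
    have mi: "real (M j i) > 0" if "i \<in> {2..r}" for i using Mpos[of i j] that by auto
    have P: "(\<Prod>i\<in>{2..r}. real (M j i)) > 0" using mi by (intro prod_pos) auto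
    have lp: "ln (\<Prod>i\<in>{2..r}. real (M j i)) = (\<Sum>i=2..r. ln (real (M j i)))"
      using mi by (intro ln_prod) auto
    have "ln (real (M j 1) * (\<Prod>i\<in>{2..r}. real (M j i)) powr (1/s)) \<le> ln (real d ^ N j)"
      proof (subst ln_le_cancel_iff)
      show "0 < real (M j 1) * (\<Prod>i\<in>{2..r}. real (M j i)) powr (1/s)"
      proof (rule mult_pos_pos)
        show "0 < real (M j 1)" by (rule m1)
        have "(\<Prod>i\<in>{2..r}. real (M j i)) \<noteq> 0" using P by linarith
        then show "0 < (\<Prod>i\<in>{2..r}. real (M j i)) powr (1/s)" by (subst powr_gt_zero) assumption
      qed
    qed (use fb d1 in auto)
    also have "ln (real (M j 1) * (\<Prod>i\<in>{2..r}. real (M j i)) powr (1/s))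
        = ln (real (M j 1)) + (1/s) * (\<Sum>i=2..r. ln (real (M j i)))"
      using m1 P mi Mpos[of _ j] by (simp add: ln_mult ln_powr lp)
    also have "ln (real d ^ N j) = real (N j) * ln (real d)" using d1 by (simp add: ln_realpow)
    finally have ineq: "ln (real (M j 1)) + (1/s) * (\<Sum>i=2..r. ln (real (M j i))) \<le> real (N j) * ln (real d)" .
    have "L j = (ln (real (M j 1)) + (1/s) * (\<Sum>i=2..r. ln (real (M j i)))) / (ln 2 * real (N j))"
      unfolding L_def log_def by (simp add: sum_divide_distrib[symmetric] add_divide_distrib field_simps)
    also have "\<dots> \<le> (real (N j) * ln (real d)) / (ln 2 * real (N j))"
      using ineq Nj by (intro divide_right_mono) auto
    also have "\<dots> = log 2 (real d)" using Nj by (simp add: log_def)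
    finally show ?thesis .
  qed
  have ev: "eventually (\<lambda>j. L j \<le> log 2 (real d)) sequentially"
  proof -
    have "eventually (\<lambda>j. N j \<ge> 1) sequentially" using N by (simp add: filterlim_at_top)
    then show ?thesis by eventually_elim (auto intro: Lle)
  qed
  have limL: "L \<longlonglongrightarrow> R 1 + (1/s) * (\<Sum>i=2..r. R i)"
    unfolding L_def using assms(3)
    by (intro tendsto_intros lim) auto
  have main: "R 1 + (1/s) * (\<Sum>i=2..r. R i) \<le> log 2 (real d)"
    using tendsto_le[OF trivial_limit_sequentially tendsto_const limL ev] .
  have s0: "s > 0" using s1 by simp
  have "(1/s) * (\<Sum>i=2..r. R i) \<le> (1 - \<alpha>) * log 2 (real d)"
    using main assms(10) by (simp add: algebra_simps)
  then have "(\<Sum>i=2..r. R i) \<le> s * ((1 - \<alpha>) * log 2 (real d))"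
    using s0 by (simp add: field_simps)
  also have "s * ((1 - \<alpha>) * log 2 (real d)) = (1 - \<alpha>) * log 2 q"
    unfolding log_def using sln by (simp add: field_simps)
  finally show ?thesis using q by simp
qed

end
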